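(* Let $X$ be a CLP-compact (Hausdorff) space with a dense discrete subspace $Y$, and let $Z\subset X$ be a set with $Z\setminus Y$ finite. Then the closure $\overline{Z}$ of $Z$ in $X$ is countably compact at $Z$. Moreover, if $\overline{Z}\setminus Z$ is compact, then $\overline{Z}$ is compact.
   Context: A space is CLP-compact if every cover by clopen sets has a finite subcover. A space $W$ is countably compact at a subset $A\subset W$ if every infinite subset $B\subset A$ has an accumulation point in $W$. *)

theory Defs
  imports "HOL-Analysis.Analysis"
begin

definition CLP_compact :: "'a topology \<Rightarrow> bool" where
  "CLP_compact X \<longleftrightarrow>
     (\<forall>\<U>. (\<forall>U\<in>\<U>. openin X U \<and> closedin X U) \<and> topspace X \<subseteq> \<Union>\<U> \<longrightarrow>
          (\<exists>\<F>. finite \<F> \<and> \<F> \<subseteq> \<U> \<and> topspace X \<subseteq> \<Union>\<F>))"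

definition discrete_subspace :: "'a topology \<Rightarrow> 'a set \<Rightarrow> bool" where
  "discrete_subspace X Y \<longleftrightarrow> Y \<subseteq> topspace X \<and> (\<forall>y\<in>Y. openin (subtopology X Y) {y})"

definition countably_compact_at :: "'a topology \<Rightarrow> 'a set \<Rightarrow> bool" where
  "countably_compact_at W A \<longleftrightarrow>
     (\<forall>B. B \<subseteq> A \<and> infinite B \<longrightarrow> W derived_set_of B \<noteq> {})"

end

theory Submission
  imports Defs
begin

lemma cov:
  assumes "compactin X S" "\<forall>U\<in>\<U>. openin X U" "S \<subseteq> \<Union>\<U>"
  shows "\<exists>F. finite F \<and> F \<subseteq> \<U> \<and> S \<subseteq> \<Union>F"
proof -
  have "\<forall>\<U>. (\<forall>U\<in>\<U>. openin X U) \<and> S \<subseteq> \<Union>\<U> \<longrightarrow> (\<exists>F. finite F \<and> F \<subseteq> \<U> \<and> S \<subseteq> \<Union>F)"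
    using assms(1) unfolding compactin_def by (rule conjunct2)
  then have "(\<forall>U\<in>\<U>. openin X U) \<and> S \<subseteq> \<Union>\<U> \<longrightarrow> (\<exists>F. finite F \<and> F \<subseteq> \<U> \<and> S \<subseteq> \<Union>F)"
    by (rule spec)
  then show ?thesis using assms(2,3) by blast
qed

lemma iso_pt:
  assumes "Hausdorff_space X" "discrete_subspace X Y" "X closure_of Y = topspace X" "y \<in> Y"
  shows "openin X {y}"
proof -
  from assms(2,4) obtain U where U: "openin X U" "{y} = U \<inter> Y"
    unfolding discrete_subspace_def openin_subtopology by blast
  have yX: "y \<in> topspace X" using assms(2,4) unfolding discrete_subspace_def by blast
  have cy: "closedin X {y}"
    using closedin_t1_singleton[OF Hausdorff_imp_t1_space[OF assms(1)] yX] .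
  have "U = {y}"
  proof (rule ccontr)
    assume "U \<noteq> {y}"
    then obtain u where u: "u \<in> U" "u \<noteq> y" using U by blast
    have o: "openin X (U - {y})" using U(1) cy by (simp add: openin_diff)
    have "U \<subseteq> topspace X" by (rule openin_subset[OF U(1)])
    then have uc: "u \<in> X closure_of Y" using assms(3) u by blast
    then have "u \<in> topspace X \<and> (\<forall>T. u \<in> T \<and> openin X T \<longrightarrow> (\<exists>z. z \<in> Y \<and> z \<in> T))"
      by (rule iffD1[OF in_closure_of])
    then have "u \<in> U - {y} \<and> openin X (U - {y}) \<longrightarrow> (\<exists>z. z \<in> Y \<and> z \<in> U - {y})"
      by (elim conjE allE[of _ "U - {y}"])
    then obtain z where "z \<in> Y" "z \<in> U - {y}" using u o by blast
    then show False using U(2) by blast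
  qed
  then show ?thesis using U by simp
qed

lemma closed_sub_finite:
  assumes "Hausdorff_space X" "CLP_compact X" "discrete_subspace X Y" "X closure_of Y = topspace X"
    and "closedin X E" "E \<subseteq> Y"
  shows "finite E"
proof -
  have op: "openin X {e}" if "e \<in> E" for e
    by (rule iso_pt[OF assms(1,3,4)]) (use that assms(6) in blast)
  have EX: "E \<subseteq> topspace X" using assms(5) by (rule closedin_subset)
  have cl: "closedin X {e}" if "e \<in> E" for e
    by (rule closedin_t1_singleton[OF Hausdorff_imp_t1_space[OF assms(1)]]) (use that EX in blast)
  have "E = \<Union>((\<lambda>e. {e}) ` E)" by blast
  moreover have "openin X (\<Union>((\<lambda>e. {e}) ` E))"
  proof (rule openin_Union)
    fix S assume "S \<in> (\<lambda>e. {e}) ` E"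
    then obtain e where "e \<in> E" "S = {e}" by blast
    then show "openin X S" using op by simp
  qed
  ultimately have oE: "openin X E" by simp
  define \<U> where "\<U> = insert (topspace X - E) ((\<lambda>e. {e}) ` E)"
  have "\<forall>U\<in>\<U>. openin X U \<and> closedin X U"
  proof
    fix U assume U: "U \<in> \<U>"
    have o1: "openin X (topspace X - E)" using assms(5) by (simp add: closedin_def)
    have c1: "closedin X (topspace X - E)" using oE by (simp add: closedin_diff)
    show "openin X U \<and> closedin X U"
    proof (cases "U = topspace X - E")
      case True
      then show ?thesis using o1 c1 by simp
    next
      case False
      then have "U \<in> (\<lambda>e. {e}) ` E" using U unfolding \<U>_def by simp
      then obtain e where "e \<in> E" "U = {e}" by blast
      then show ?thesis using op cl by simp
    qed
  qed
  moreover have "topspace X \<subseteq> \<Union>\<U>" unfolding \<U>_def by blast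
  moreover have "(\<forall>U\<in>\<U>. openin X U \<and> closedin X U) \<and> topspace X \<subseteq> \<Union>\<U> \<longrightarrow>
      (\<exists>F. finite F \<and> F \<subseteq> \<U> \<and> topspace X \<subseteq> \<Union>F)"
    using assms(2) unfolding CLP_compact_def by (rule spec)
  ultimately have "\<exists>F. finite F \<and> F \<subseteq> \<U> \<and> topspace X \<subseteq> \<Union>F" by blast
  then obtain F where F: "finite F" "F \<subseteq> \<U>" "topspace X \<subseteq> \<Union>F" by blast
  have "E \<subseteq> \<Union>(F - {topspace X - E})"
  proof
    fix e assume e: "e \<in> E"
    then obtain S where S: "S \<in> F" "e \<in> S" using F(3) EX by auto
    then have "S \<noteq> topspace X - E" using e by auto
    then show "e \<in> \<Union>(F - {topspace X - E})" using S by auto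
  qed
  moreover have "finite (\<Union>(F - {topspace X - E}))"
  proof (rule finite_Union)
    show "finite (F - {topspace X - E})" using F(1) by simp
    fix S assume "S \<in> F - {topspace X - E}"
    then have "S \<in> \<U>" "S \<noteq> topspace X - E" using F(2) by auto
    then have "S \<in> (\<lambda>e. {e}) ` E" unfolding \<U>_def by simp
    then show "finite S" by auto
  qed
  ultimately show ?thesis by (rule finite_subset)
qed

lemma closed_compact:
  assumes "Hausdorff_space X" "CLP_compact X" "discrete_subspace X Y" "X closure_of Y = topspace X"
    and "closedin X E" "finite (E - Y)"
  shows "compactin X E"
  unfolding compactin_def
proof (intro conjI allI impI)
  show "E \<subseteq> topspace X" using assms(5) by (rule closedin_subset)
  fix \<U> assume H: "(\<forall>U\<in>\<U>. openin X U) \<and> E \<subseteq> \<Union>\<U>"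
  then have "\<forall>p\<in>E - Y. \<exists>U\<in>\<U>. p \<in> U" by blast
  then obtain f where f: "\<And>p. p \<in> E - Y \<Longrightarrow> f p \<in> \<U> \<and> p \<in> f p" by metis
  define W where "W = \<Union>(f ` (E - Y))"
  have "openin X W" unfolding W_def
  proof (rule openin_Union)
    fix S assume "S \<in> f ` (E - Y)"
    then obtain p where "p \<in> E - Y" "S = f p" by blast
    then show "openin X S" using f H by blast
  qed
  then have "closedin X (E - W)" using assms(5) by (simp add: closedin_diff)
  moreover have "E - W \<subseteq> Y" unfolding W_def using f by blast
  ultimately have "finite (E - W)" by (rule closed_sub_finite[OF assms(1-4)])
  moreover have "E - W \<subseteq> topspace X" using \<open>E \<subseteq> topspace X\<close> by blast
  ultimately have cEW: "compactin X (E - W)" by (simp add: finite_imp_compactin)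
  have "E - W \<subseteq> \<Union>\<U>" using H by blast
  then obtain G where G: "finite G" "G \<subseteq> \<U>" "E - W \<subseteq> \<Union>G"
    using cov[OF cEW conjunct1[OF H]] by blast
  show "\<exists>\<F>. finite \<F> \<and> \<F> \<subseteq> \<U> \<and> E \<subseteq> \<Union>\<F>"
  proof (rule exI[of _ "G \<union> f ` (E - Y)"], intro conjI)
    show "finite (G \<union> f ` (E - Y))" using G(1) assms(6) by simp
    show "G \<union> f ` (E - Y) \<subseteq> \<U>" using G(2) f by auto
    have "E \<subseteq> (E - W) \<union> W" by blast
    also have "\<dots> \<subseteq> \<Union>G \<union> W" using G(3) by blast
    also have "\<dots> = \<Union>(G \<union> f ` (E - Y))" unfolding W_def by simp
    finally show "E \<subseteq> \<Union>(G \<union> f ` (E - Y))" .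
  qed
qed

theorem lemma2p1:
  fixes X :: "'a topology" and Y Z :: "'a set"
  assumes "Hausdorff_space X"
    and "CLP_compact X"
    and "discrete_subspace X Y"
    and "X closure_of Y = topspace X"
    and "Z \<subseteq> topspace X"
    and "finite (Z - Y)"
  shows "countably_compact_at (subtopology X (X closure_of Z)) Z
         \<and> (compactin X (X closure_of Z - Z) \<longrightarrow> compactin X (X closure_of Z))"
proof
  show "countably_compact_at (subtopology X (X closure_of Z)) Z"
    unfolding countably_compact_at_def
  proof (intro allI impI)
    fix B assume B: "B \<subseteq> Z \<and> infinite B"
    have "B \<subseteq> (B \<inter> Y) \<union> (Z - Y)" using B by blast
    have inf: "infinite (B \<inter> Y)"
    proof
      assume "finite (B \<inter> Y)"
      then have "finite ((B \<inter> Y) \<union> (Z - Y))" using assms(6) by simp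
      then have "finite B" using finite_subset[OF \<open>B \<subseteq> (B \<inter> Y) \<union> (Z - Y)\<close>] by blast
      then show False using B by blast
    qed
    have "X derived_set_of (B \<inter> Y) \<noteq> {}"
    proof
      assume "X derived_set_of (B \<inter> Y) = {}"
      moreover have "B \<inter> Y \<subseteq> topspace X" using B assms(5) by blast
      ultimately have "closedin X (B \<inter> Y)" by (simp add: closedin_contains_derived_set)
      then have "finite (B \<inter> Y)" by (rule closed_sub_finite[OF assms(1-4)]) blast
      then show False using inf by blast
    qed
    then obtain x where x: "x \<in> X derived_set_of (B \<inter> Y)" by blast
    have "B \<inter> Y \<subseteq> B" by blast
    then have "X derived_set_of (B \<inter> Y) \<subseteq> X derived_set_of B" by (rule derived_set_of_mono)
    then have xB: "x \<in> X derived_set_of B" using x by blast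
    have "X closure_of B \<subseteq> X closure_of Z" using B by (simp add: closure_of_mono)
    moreover have "X derived_set_of B \<subseteq> X closure_of B" by (rule derived_set_of_subset_closure_of)
    ultimately have xc: "x \<in> X closure_of Z" using xB by blast
    have "Z \<subseteq> X closure_of Z" by (rule closure_of_subset[OF assms(5)])
    then have "B \<subseteq> X closure_of Z" using B by blast
    then have "X closure_of Z \<inter> B = B" by blast
    then have "subtopology X (X closure_of Z) derived_set_of B = X closure_of Z \<inter> X derived_set_of B"
      by (simp add: derived_set_of_subtopology)
    then show "subtopology X (X closure_of Z) derived_set_of B \<noteq> {}"
      using xB xc by blast
  qed
  show "compactin X (X closure_of Z - Z) \<longrightarrow> compactin X (X closure_of Z)"
  proof
    assume K: "compactin X (X closure_of Z - Z)"
    show "compactin X (X closure_of Z)"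
      unfolding compactin_def
    proof (intro conjI allI impI)
      show "X closure_of Z \<subseteq> topspace X" by (rule closure_of_subset_topspace)
      fix \<U> assume H: "(\<forall>U\<in>\<U>. openin X U) \<and> X closure_of Z \<subseteq> \<Union>\<U>"
      then obtain F1 where F1: "finite F1" "F1 \<subseteq> \<U>" "X closure_of Z - Z \<subseteq> \<Union>F1"
        using cov[OF K conjunct1[OF H]] H by blast
      have "openin X (\<Union>F1)" using F1(2) H by (intro openin_Union) blast
      then have cE: "closedin X (X closure_of Z - \<Union>F1)" by (simp add: closedin_diff)
      have "X closure_of Z - \<Union>F1 - Y \<subseteq> Z - Y" using F1 by blast
      then have "finite (X closure_of Z - \<Union>F1 - Y)" using assms(6) by (rule finite_subset)
      then have cC: "compactin X (X closure_of Z - \<Union>F1)"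
        by (rule closed_compact[OF assms(1-4) cE])
      have "X closure_of Z - \<Union>F1 \<subseteq> \<Union>\<U>" using H by blast
      then obtain F2 where F2: "finite F2" "F2 \<subseteq> \<U>" "X closure_of Z - \<Union>F1 \<subseteq> \<Union>F2"
        using cov[OF cC conjunct1[OF H]] by blast
      show "\<exists>\<F>. finite \<F> \<and> \<F> \<subseteq> \<U> \<and> X closure_of Z \<subseteq> \<Union>\<F>"
      proof (rule exI[of _ "F1 \<union> F2"], intro conjI)
        show "finite (F1 \<union> F2)" using F1(1) F2(1) by simp
        show "F1 \<union> F2 \<subseteq> \<U>" using F1(2) F2(2) by simp
        have "X closure_of Z \<subseteq> \<Union>F1 \<union> (X closure_of Z - \<Union>F1)" by blast
        also have "\<dots> \<subseteq> \<Union>F1 \<union> \<Union>F2" using F2(3) by blast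
        finally show "X closure_of Z \<subseteq> \<Union>(F1 \<union> F2)" by simp
      qed
    qed
  qed
qed

end
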